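(* Fix $k_0\ge 0$ and $c_0\in L^1([-\tau,0);\mathbb{R}_+)$. (i) The admissible set $\mathcal{C}(k_0,c_0)$ is nonempty if and only if $c^m\in\mathcal C(k_0,c_0)$, i.e. if and only if $k^M(t)\ge0$ for every $t\ge0$. (ii) If $\lambda_0\ge A-\delta$, then for every $c_0\in L^1([-\tau,0);\mathbb{R}_+)$ with $c_0>0$ on a set of positive Lebesgue measure, $\mathcal{C}(k_0,c_0)=\emptyset$.
   Context: Fixed parameters: $A>0$, $\delta>0$, $\varepsilon>0$, $\eta>0$, $\tau>0$. For $c\in L^1_{loc}([0,\infty);\mathbb{R}_+)$, $\widetilde c$ denotes its concatenation with $c_0$ ($\widetilde c=c_0$ on $[-\tau,0)$, $\widetilde c=c$ on $[0,\infty)$); the habit is $h(t)=\varepsilon\int_{t-\tau}^{t}\widetilde c(u)e^{\eta(u-t)}du$; the capital path is $k(t)=k_0e^{(A-\delta)t}-\int_0^te^{(A-\delta)(t-u)}c(u)du$. The admissible set is $\mathcal C(k_0,c_0)=\{c\in L^1_{loc}([0,\infty);\mathbb{R}_+): k(t)\ge0\ \forall t\ge0,\ c(t)\ge h(t)\ge0 \text{ for a.e. } t\ge0\}$. $c^m$ is the unique solution of $c^m(t)=\varepsilon\int_{t-\tau}^{t}\widetilde c^{\,m}(u)e^{\eta(u-t)}du$, $t\ge0$ (with $\widetilde c^{\,m}$ the concatenation of $c_0$ and $c^m$), and $k^M(t)=e^{(A-\delta)t}[k_0-\int_0^tc^m(u)e^{-(A-\delta)u}du]$ is its capital path. $\lambda_0$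 is the unique real root of $1=\varepsilon\int_{-\tau}^0e^{(\lambda+\eta)u}du$. *)

theory Defs
  imports "HOL-Analysis.Analysis"
begin

definition L1_nonneg_init :: "real \<Rightarrow> (real \<Rightarrow> real) \<Rightarrow> bool" where
  "L1_nonneg_init \<tau> c0 \<longleftrightarrow>
     set_integrable lborel {-\<tau>..<0} c0 \<and> (AE u in lborel. u \<in> {-\<tau>..<0} \<longrightarrow> 0 \<le> c0 u)"

definition L1loc :: "(real \<Rightarrow> real) \<Rightarrow> bool" where
  "L1loc c \<longleftrightarrow> (\<forall>T\<ge>0. set_integrable lborel {0..T} c)"

definition L1loc_nonneg :: "(real \<Rightarrow> real) \<Rightarrow> bool" where
  "L1loc_nonneg c \<longleftrightarrow> L1loc c \<and> (AE t in lborel. 0 \<le> t \<longrightarrow> 0 \<le> c t)"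

definition concat :: "(real \<Rightarrow> real) \<Rightarrow> (real \<Rightarrow> real) \<Rightarrow> real \<Rightarrow> real" where
  "concat c0 c u = (if u < 0 then c0 u else c u)"

definition habit :: "real \<Rightarrow> real \<Rightarrow> real \<Rightarrow> (real \<Rightarrow> real) \<Rightarrow> (real \<Rightarrow> real) \<Rightarrow> real \<Rightarrow> real" where
  "habit \<epsilon> \<eta> \<tau> c0 c t =
     \<epsilon> * (LBINT u:{t-\<tau>..t}. concat c0 c u * exp (\<eta> * (u - t)))"

definition capital :: "real \<Rightarrow> real \<Rightarrow> real \<Rightarrow> (real \<Rightarrow> real) \<Rightarrow> real \<Rightarrow> real" where
  "capital A \<delta> k0 c t =
     k0 * exp ((A - \<delta>) * t) - (LBINT u:{0..t}. exp ((A - \<delta>) * (t - u)) * c u)"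

definition admissible ::
  "real \<Rightarrow> real \<Rightarrow> real \<Rightarrow> real \<Rightarrow> real \<Rightarrow> real \<Rightarrow> (real \<Rightarrow> real) \<Rightarrow> (real \<Rightarrow> real) set" where
  "admissible A \<delta> \<epsilon> \<eta> \<tau> k0 c0 =
     {c. L1loc_nonneg c \<and> (\<forall>t\<ge>0. capital A \<delta> k0 c t \<ge> 0) \<and>
         (AE t in lborel. 0 \<le> t \<longrightarrow>
             habit \<epsilon> \<eta> \<tau> c0 c t \<le> c t \<and> 0 \<le> habit \<epsilon> \<eta> \<tau> c0 c t)}"

definition is_cm :: "real \<Rightarrow> real \<Rightarrow> real \<Rightarrow> (real \<Rightarrow> real) \<Rightarrow> (real \<Rightarrow> real) \<Rightarrow> bool" where
  "is_cm \<epsilon> \<eta> \<tau> c0 cm \<longleftrightarrow> L1loc cm \<and> (\<forall>t\<ge>0. cm t = habit \<epsilon> \<eta> \<tau> c0 cm t)"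

definition kM :: "real \<Rightarrow> real \<Rightarrow> real \<Rightarrow> (real \<Rightarrow> real) \<Rightarrow> real \<Rightarrow> real" where
  "kM A \<delta> k0 cm t =
     exp ((A - \<delta>) * t) * (k0 - (LBINT u:{0..t}. cm u * exp (- (A - \<delta>) * u)))"

definition lambda0 :: "real \<Rightarrow> real \<Rightarrow> real \<Rightarrow> real" where
  "lambda0 \<epsilon> \<eta> \<tau> = (THE l. 1 = \<epsilon> * (LBINT u:{-\<tau>..0}. exp ((l + \<eta>) * u)))"

end

theory Submission
  imports Defs
begin


lemma set_int_subset_mono:
  fixes f :: "real \<Rightarrow> real"
  assumes "set_integrable lborel B f" "A \<subseteq> B" "A \<in> sets lborel" "\<And>x. x \<in> B \<Longrightarrow> 0 \<le> f x"
  shows "(LBINT x:A. f x) \<le> (LBINT x:B. f x)"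
proof -
  have "set_integrable lborel A f" using assms set_integrable_subset by blast
  then show ?thesis using assms unfolding set_integrable_def set_lebesgue_integral_def
    by (intro integral_mono) (auto split: split_indicator)
qed

lemma int_power_0:
  assumes "0 \<le> t"
  shows "(LBINT u:{0..t}. u ^ k) = t ^ Suc k / Suc k"
proof -
  have "(LBINT u:{0..t}. u ^ k) = (\<lambda>u. u ^ Suc k / Suc k) t - (\<lambda>u. u ^ Suc k / Suc k) 0"
    unfolding set_lebesgue_integral_def
  proof (rule integral_FTC_atLeastAtMost[OF assms])
    fix x :: real
    have "((\<lambda>u. u ^ Suc k / Suc k) has_real_derivative (real (Suc k) * x ^ (Suc k - Suc 0)) / Suc k) (at x)"
      by (intro DERIV_cdivide DERIV_pow)
    then have "((\<lambda>u. u ^ Suc k / Suc k) has_real_derivative x ^ k) (at x)"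
      by (simp del: of_nat_Suc)
    then show "((\<lambda>u. u ^ Suc k / Suc k) has_vector_derivative x ^ k) (at x within {0..t})"
      by (simp add: has_real_derivative_iff_has_vector_derivative[symmetric] has_field_derivative_at_within)
  qed (intro continuous_intros)
  then show ?thesis by simp
qed

lemma pow_fact_lim: "(\<lambda>k. y ^ k / fact k :: real) \<longlonglongrightarrow> 0"
proof -
  have "summable (\<lambda>k. inverse (fact k) * y ^ k :: real)" by (rule summable_exp)
  then have "(\<lambda>k. inverse (fact k) * y ^ k :: real) \<longlonglongrightarrow> 0" by (rule summable_LIMSEQ_zero)
  then show ?thesis by (simp add: divide_inverse mult.commute)
qed

lemma gronwall:
  fixes n :: "real \<Rightarrow> real" and K :: real
  assumes nn: "\<And>t. 0 \<le> n t" and int: "\<And>T. set_integrable lborel {0..T} n" and K: "0 \<le> K"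
    and ineq: "AE t in lborel. 0 \<le> t \<longrightarrow> n t \<le> K * (LBINT u:{0..t}. n u)"
  shows "AE t in lborel. 0 \<le> t \<longrightarrow> n t = 0"
proof -
  have fin: "AE t in lborel. 0 \<le> t \<and> t \<le> T \<longrightarrow> n t = 0" if T: "0 \<le> T" for T
  proof -
    define M where "M = K * (LBINT u:{0..T}. n u)"
    have ind: "AE t in lborel. 0 \<le> t \<and> t \<le> T \<longrightarrow> n t \<le> M * (K*t)^k / fact k" for k
    proof (induction k)
      case 0
      have "n t \<le> M" if "0 \<le> t" "t \<le> T" "n t \<le> K * (LBINT u:{0..t}. n u)" for t
      proof -
        have "(LBINT u:{0..t}. n u) \<le> (LBINT u:{0..T}. n u)"
          using that by (intro set_int_subset_mono[OF int]) (auto simp: nn)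
        then show ?thesis using that K unfolding M_def by (meson mult_left_mono order_trans)
      qed
      then show ?case using ineq by (auto elim!: eventually_mono)
    next
      case (Suc k)
      have b: "(LBINT u:{0..t}. n u) \<le> M * K^k / fact k * (t ^ Suc k / Suc k)" if "0 \<le> t" "t \<le> T" for t
      proof -
        have "(LBINT u:{0..t}. n u) \<le> (LBINT u:{0..t}. M * K^k / fact k * u ^ k)"
        proof (rule set_integral_mono_AE)
          show "set_integrable lborel {0..t} n" by (rule int)
          show "set_integrable lborel {0..t} (\<lambda>u. M * K^k / fact k * u ^ k)"
            by (intro borel_integrable_atLeastAtMost' continuous_intros)
          show "AE x\<in>{0..t} in lborel. n x \<le> M * K ^ k / fact k * x ^ k"
            using Suc.IH that by (auto elim!: eventually_mono simp: power_mult_distrib)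
        qed
        also have "\<dots> = M * K^k / fact k * (t ^ Suc k / Suc k)"
          using int_power_0[OF that(1), of k] by simp
        finally show ?thesis .
      qed
      have "n t \<le> M * (K*t)^Suc k / fact (Suc k)"
        if "0 \<le> t" "t \<le> T" "n t \<le> K * (LBINT u:{0..t}. n u)" for t
      proof -
        have "n t \<le> K * (M * K^k / fact k * (t ^ Suc k / Suc k))"
          using b[OF that(1,2)] that(3) K by (meson mult_left_mono order_trans)
        also have "\<dots> = M * (K*t)^Suc k / fact (Suc k)"
          by (simp add: power_mult_distrib field_simps)
        finally show ?thesis .
      qed
      then show ?case using ineq by (auto elim!: eventually_mono)
    qed
    then have "AE t in lborel. \<forall>k. 0 \<le> t \<and> t \<le> T \<longrightarrow> n t \<le> M * (K*t)^k / fact k"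
      unfolding AE_all_countable using ind by blast
    then show ?thesis
    proof (rule eventually_mono, intro impI)
      fix t assume h: "\<forall>k. 0 \<le> t \<and> t \<le> T \<longrightarrow> n t \<le> M * (K*t)^k / fact k" and t: "0 \<le> t \<and> t \<le> T"
      have "(\<lambda>k. M * ((K*t)^k / fact k)) \<longlonglongrightarrow> M * 0"
        by (intro tendsto_mult tendsto_const pow_fact_lim)
      moreover have "\<exists>N. \<forall>k\<ge>N. n t \<le> M * ((K*t)^k / fact k)"
        using h t by auto
      ultimately have "n t \<le> M * 0" by (rule LIMSEQ_le_const)
      then show "n t = 0" using nn[of t] by simp
    qed
  qed
  have "AE t in lborel. \<forall>m::nat. 0 \<le> t \<and> t \<le> real m \<longrightarrow> n t = 0"
    unfolding AE_all_countable using fin by simp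
  then show ?thesis
  proof (rule eventually_mono, intro impI)
    fix t :: real assume "\<forall>m::nat. 0 \<le> t \<and> t \<le> real m \<longrightarrow> n t = 0" "0 \<le> t"
    moreover obtain m :: nat where "t \<le> real m" using real_arch_simple by blast
    ultimately show "n t = 0" by blast
  qed
qed



lemma si_mult_exp:
  fixes f :: "real \<Rightarrow> real"
  assumes "set_integrable lborel S f" "\<And>u. u \<in> S \<Longrightarrow> u \<le> t" "0 \<le> \<eta>"
  shows "set_integrable lborel S (\<lambda>u. f u * exp (\<eta> * (u - t)))"
  unfolding set_integrable_def
proof (rule Bochner_Integration.integrable_bound)
  show "integrable lborel (\<lambda>x. indicator S x *\<^sub>R f x)" using assms(1) by (simp add: set_integrable_def)
  have "(\<lambda>x. (indicator S x *\<^sub>R f x) * exp (\<eta> * (x - t))) \<in> borel_measurable lborel"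
    using borel_measurable_integrable[OF \<open>integrable lborel (\<lambda>x. indicator S x *\<^sub>R f x)\<close>]
    by measurable
  then show "(\<lambda>x. indicator S x *\<^sub>R (f x * exp (\<eta> * (x - t)))) \<in> borel_measurable lborel"
    by (simp add: mult.assoc)
  show "AE x in lborel. norm (indicator S x *\<^sub>R (f x * exp (\<eta> * (x - t)))) \<le> norm (indicator S x *\<^sub>R f x)"
  proof (intro AE_I2)
    fix x show "norm (indicator S x *\<^sub>R (f x * exp (\<eta> * (x - t)))) \<le> norm (indicator S x *\<^sub>R f x)"
    proof (cases "x \<in> S")
      case True
      then have "exp (\<eta> * (x - t)) \<le> 1" using assms(2,3) by (simp add: mult_nonneg_nonpos)
      then show ?thesis using True by (simp add: abs_mult mult_left_le)
    qed simp
  qed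
qed

lemma L1loc_sub: "L1loc c \<Longrightarrow> 0 \<le> a \<Longrightarrow> set_integrable lborel {a..b} c"
  unfolding L1loc_def by (cases "a \<le> b") (auto intro: set_integrable_subset[of _ "{0..b}"])

lemma habit_split:
  assumes hc0: "set_integrable lborel {-\<tau>..<0} c0" and hc: "L1loc c" and t: "0 \<le> t" and \<eta>: "0 \<le> \<eta>"
  shows "habit \<epsilon> \<eta> \<tau> c0 c t = \<epsilon> * (LBINT u:{t-\<tau>..<0}. c0 u * exp (\<eta> * (u - t)))
                                 + \<epsilon> * (LBINT u:{max 0 (t-\<tau>)..t}. c u * exp (\<eta> * (u - t)))"
proof -
  have un: "{t-\<tau>..t} = {t-\<tau>..<0} \<union> {max 0 (t-\<tau>)..t}" using t by auto
  have i1: "set_integrable lborel {t-\<tau>..<0} (\<lambda>u. c0 u * exp (\<eta> * (u - t)))"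
    by (rule si_mult_exp[OF set_integrable_subset[OF hc0]]) (use t \<eta> in auto)
  have i2: "set_integrable lborel {max 0 (t-\<tau>)..t} (\<lambda>u. c u * exp (\<eta> * (u - t)))"
    by (rule si_mult_exp[OF L1loc_sub[OF hc]]) (use \<eta> in auto)
  have "(LBINT u:{t-\<tau>..t}. concat c0 c u * exp (\<eta> * (u - t)))
      = (LBINT u:{t-\<tau>..<0}. concat c0 c u * exp (\<eta> * (u - t)))
        + (LBINT u:{max 0 (t-\<tau>)..t}. concat c0 c u * exp (\<eta> * (u - t)))"
    unfolding un
  proof (rule set_integral_Un)
    show "{t - \<tau>..<0} \<inter> {max 0 (t - \<tau>)..t} = {}" by auto
    show "set_integrable lborel {t-\<tau>..<0} (\<lambda>u. concat c0 c u * exp (\<eta> * (u - t)))"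
      using i1 by (rule set_integrable_cong[THEN iffD1, rotated -1]) (auto simp: concat_def)
    show "set_integrable lborel {max 0 (t-\<tau>)..t} (\<lambda>u. concat c0 c u * exp (\<eta> * (u - t)))"
      using i2 by (rule set_integrable_cong[THEN iffD1, rotated -1]) (auto simp: concat_def)
  qed
  also have "\<dots> = (LBINT u:{t-\<tau>..<0}. c0 u * exp (\<eta> * (u - t)))
                + (LBINT u:{max 0 (t-\<tau>)..t}. c u * exp (\<eta> * (u - t)))"
    by (intro arg_cong2[where f="(+)"] set_lebesgue_integral_cong) (auto simp: concat_def)
  finally show ?thesis unfolding habit_def by (simp add: distrib_left)
qed



lemma si_max0:
  fixes g :: "real \<Rightarrow> real"
  assumes "set_integrable M A g"
  shows "set_integrable M A (\<lambda>u. max 0 (g u))"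
proof -
  have "integrable M (\<lambda>x. max 0 (indicator A x *\<^sub>R g x))"
    using assms unfolding set_integrable_def by (intro integrable_max) auto
  moreover have "(\<lambda>x. indicator A x *\<^sub>R max 0 (g x)) = (\<lambda>x. max 0 (indicator A x *\<^sub>R g x))"
    by (auto split: split_indicator simp: fun_eq_iff)
  ultimately show ?thesis unfolding set_integrable_def by simp
qed

lemma set_int_nonneg:
  fixes f :: "real \<Rightarrow> real"
  assumes "\<And>x. x \<in> A \<Longrightarrow> 0 \<le> f x"
  shows "0 \<le> (LBINT x:A. f x)"
  unfolding set_lebesgue_integral_def using assms
  by (intro integral_nonneg_AE AE_I2) (auto split: split_indicator)

lemma set_integrable_uminus:
  fixes g :: "real \<Rightarrow> real"
  assumes "set_integrable M A g"
  shows "set_integrable M A (\<lambda>u. - g u)"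
  using integrable_minus[OF assms[unfolded set_integrable_def]] unfolding set_integrable_def by simp

lemma si_mult_cont:
  fixes f g :: "real \<Rightarrow> real"
  assumes f: "set_integrable lborel {a..b} f" and g: "continuous_on UNIV g"
  shows "set_integrable lborel {a..b} (\<lambda>u. g u * f u)"
proof -
  have "compact (g ` {a..b})" by (rule compact_continuous_image) (use g in \<open>auto intro: continuous_on_subset\<close>)
  then obtain B where B: "\<And>u. u \<in> {a..b} \<Longrightarrow> \<bar>g u\<bar> \<le> B"
    using compact_imp_bounded bounded_real by (metis imageI)
  show ?thesis
    unfolding set_integrable_def
  proof (rule Bochner_Integration.integrable_bound)
    show "integrable lborel (\<lambda>x. B * (indicator {a..b} x *\<^sub>R f x))" using f by (simp add: set_integrable_def)
    have gm: "g \<in> borel_measurable lborel" using borel_measurable_continuous_onI[OF g] by simp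
    have "(\<lambda>x. g x * (indicator {a..b} x *\<^sub>R f x)) \<in> borel_measurable lborel"
      using borel_measurable_integrable[of lborel "\<lambda>x. indicator {a..b} x *\<^sub>R f x"] f gm
      unfolding set_integrable_def by measurable
    then show "(\<lambda>x. indicator {a..b} x *\<^sub>R (g x * f x)) \<in> borel_measurable lborel"
      by (simp add: ac_simps)
    show "AE x in lborel. norm (indicator {a..b} x *\<^sub>R (g x * f x)) \<le> norm (B * (indicator {a..b} x *\<^sub>R f x))"
    proof (intro AE_I2)
      fix x show "norm (indicator {a..b} x *\<^sub>R (g x * f x)) \<le> norm (B * (indicator {a..b} x *\<^sub>R f x))"
      proof (cases "x \<in> {a..b}")
        case True
        then have "\<bar>g x\<bar> \<le> \<bar>B\<bar>" using B by force
        then show ?thesis using True by (simp add: abs_mult mult_right_mono)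
      qed simp
    qed
  qed
qed

lemma win_bound:
  fixes g :: "real \<Rightarrow> real"
  assumes g: "set_integrable lborel {0..t} g" and t: "0 \<le> t" and \<eta>: "0 \<le> \<eta>"
  shows "(LBINT u:{max 0 (t-\<tau>)..t}. g u * exp (\<eta> * (u - t))) \<le> (LBINT u:{0..t}. max 0 (g u))"
proof -
  have g': "set_integrable lborel {max 0 (t-\<tau>)..t} g"
    using g by (rule set_integrable_subset) auto
  have "(LBINT u:{max 0 (t-\<tau>)..t}. g u * exp (\<eta> * (u - t))) \<le> (LBINT u:{max 0 (t-\<tau>)..t}. max 0 (g u))"
  proof (rule set_integral_mono)
    show "set_integrable lborel {max 0 (t-\<tau>)..t} (\<lambda>u. g u * exp (\<eta> * (u - t)))"
      by (rule si_mult_exp[OF g']) (use \<eta> in auto)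
    show "set_integrable lborel {max 0 (t-\<tau>)..t} (\<lambda>u. max 0 (g u))" by (rule si_max0[OF g'])
    fix u assume u: "u \<in> {max 0 (t-\<tau>)..t}"
    then have e: "exp (\<eta> * (u - t)) \<le> 1" using \<eta> by (simp add: mult_nonneg_nonpos)
    show "g u * exp (\<eta> * (u - t)) \<le> max 0 (g u)"
    proof (cases "g u \<ge> 0")
      case True then show ?thesis using e by (simp add: mult_left_le)
    next
      case False then show ?thesis by (simp add: mult_nonpos_nonneg)
    qed
  qed
  also have "\<dots> \<le> (LBINT u:{0..t}. max 0 (g u))"
    by (rule set_int_subset_mono[OF si_max0[OF g]]) auto
  finally show ?thesis .
qed

lemma I1_nonneg:
  assumes "L1_nonneg_init \<tau> c0" "0 \<le> t"
  shows "0 \<le> (LBINT u:{t-\<tau>..<0}. c0 u * exp (\<eta> * (u - t)))"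
proof -
  have "AE u in lborel. u \<in> {-\<tau>..<0} \<longrightarrow> 0 \<le> c0 u" using assms(1) by (simp add: L1_nonneg_init_def)
  then show ?thesis unfolding set_lebesgue_integral_def
    by (intro integral_nonneg_AE) (use assms(2) in \<open>auto elim!: eventually_mono split: split_indicator\<close>)
qed

lemma L1loc_empty: "L1loc c \<Longrightarrow> set_integrable lborel {0..T} c"
  unfolding L1loc_def by (cases "0 \<le> T") auto

lemma cm_nonneg:
  assumes c0: "L1_nonneg_init \<tau> c0" and cm: "is_cm \<epsilon> \<eta> \<tau> c0 cm" and e: "0 < \<epsilon>" and \<eta>: "0 < \<eta>"
  shows "AE t in lborel. 0 \<le> t \<longrightarrow> 0 \<le> cm t"
proof -
  have hc0: "set_integrable lborel {-\<tau>..<0} c0" using c0 by (simp add: L1_nonneg_init_def)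
  have hcm: "L1loc cm" using cm by (simp add: is_cm_def)
  define n where "n = (\<lambda>t. max 0 (- cm t))"
  have "AE t in lborel. 0 \<le> t \<longrightarrow> n t = 0"
  proof (rule gronwall)
    show "0 \<le> n t" for t by (simp add: n_def)
    show "set_integrable lborel {0..T} n" for T
      unfolding n_def by (intro si_max0 set_integrable_uminus L1loc_empty[OF hcm])
    show "0 \<le> \<epsilon>" using e by simp
    show "AE t in lborel. 0 \<le> t \<longrightarrow> n t \<le> \<epsilon> * (LBINT u:{0..t}. n u)"
    proof (intro AE_I2 impI)
      fix t :: real assume t: "0 \<le> t"
      have i: "set_integrable lborel {0..t} (\<lambda>u. - cm u)" by (intro set_integrable_uminus L1loc_empty[OF hcm])
      have si: "set_integrable lborel {max 0 (t-\<tau>)..t} (\<lambda>u. cm u * exp (\<eta> * (u - t)))"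
        by (rule si_mult_exp[OF L1loc_sub[OF hcm]]) (use \<eta> in auto)
      have "cm t = habit \<epsilon> \<eta> \<tau> c0 cm t" using cm t by (simp add: is_cm_def)
      also have "\<dots> = \<epsilon> * (LBINT u:{t-\<tau>..<0}. c0 u * exp (\<eta> * (u - t)))
                      + \<epsilon> * (LBINT u:{max 0 (t-\<tau>)..t}. cm u * exp (\<eta> * (u - t)))"
        by (rule habit_split[OF hc0 hcm t]) (use \<eta> in simp)
      finally have "- cm t \<le> \<epsilon> * (LBINT u:{max 0 (t-\<tau>)..t}. - cm u * exp (\<eta> * (u - t)))"
        using I1_nonneg[OF c0 t, of \<eta>] e set_integral_uminus[OF si]
        by (simp add: mult_nonneg_nonneg)
      also have "\<dots> \<le> \<epsilon> * (LBINT u:{0..t}. n u)"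
        unfolding n_def using win_bound[OF i t, of \<eta> \<tau>] e \<eta> by (intro mult_left_mono) auto
      finally show "n t \<le> \<epsilon> * (LBINT u:{0..t}. n u)"
        using e set_int_nonneg[of "{0..t}" n] by (simp add: n_def)
    qed
  qed
  then show ?thesis by (auto elim!: eventually_mono simp: n_def)
qed



lemma cm_le_adm:
  assumes c0: "L1_nonneg_init \<tau> c0" and cm: "is_cm \<epsilon> \<eta> \<tau> c0 cm" and e: "0 < \<epsilon>" and \<eta>: "0 < \<eta>"
    and c: "c \<in> admissible A \<delta> \<epsilon> \<eta> \<tau> k0 c0"
  shows "AE t in lborel. 0 \<le> t \<longrightarrow> cm t \<le> c t"
proof -
  have hc0: "set_integrable lborel {-\<tau>..<0} c0" using c0 by (simp add: L1_nonneg_init_def)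
  have hcm: "L1loc cm" using cm by (simp add: is_cm_def)
  have hc: "L1loc c" using c by (simp add: admissible_def L1loc_nonneg_def)
  have hab: "AE t in lborel. 0 \<le> t \<longrightarrow> habit \<epsilon> \<eta> \<tau> c0 c t \<le> c t"
    using c by (auto simp: admissible_def elim!: eventually_mono)
  define n where "n = (\<lambda>t. max 0 (cm t - c t))"
  have "AE t in lborel. 0 \<le> t \<longrightarrow> n t = 0"
  proof (rule gronwall)
    show "0 \<le> n t" for t by (simp add: n_def)
    show "set_integrable lborel {0..T} n" for T
      unfolding n_def by (intro si_max0 set_integral_diff(1) L1loc_empty[OF hcm] L1loc_empty[OF hc])
    show "0 \<le> \<epsilon>" using e by simp
    show "AE t in lborel. 0 \<le> t \<longrightarrow> n t \<le> \<epsilon> * (LBINT u:{0..t}. n u)"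
      using hab
    proof (rule eventually_mono, intro impI)
      fix t :: real assume h: "0 \<le> t \<longrightarrow> habit \<epsilon> \<eta> \<tau> c0 c t \<le> c t" and t: "0 \<le> t"
      have i: "set_integrable lborel {0..t} (\<lambda>u. cm u - c u)"
        by (intro set_integral_diff(1) L1loc_empty[OF hcm] L1loc_empty[OF hc])
      have si1: "set_integrable lborel {max 0 (t-\<tau>)..t} (\<lambda>u. cm u * exp (\<eta> * (u - t)))"
        by (rule si_mult_exp[OF L1loc_sub[OF hcm]]) (use \<eta> in auto)
      have si2: "set_integrable lborel {max 0 (t-\<tau>)..t} (\<lambda>u. c u * exp (\<eta> * (u - t)))"
        by (rule si_mult_exp[OF L1loc_sub[OF hc]]) (use \<eta> in auto)
      have eq: "(LBINT u:{max 0 (t-\<tau>)..t}. (cm u - c u) * exp (\<eta> * (u - t)))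
          = (LBINT u:{max 0 (t-\<tau>)..t}. cm u * exp (\<eta> * (u - t))) - (LBINT u:{max 0 (t-\<tau>)..t}. c u * exp (\<eta> * (u - t)))"
      proof -
        have "(\<lambda>u. (cm u - c u) * exp (\<eta> * (u - t))) = (\<lambda>u. cm u * exp (\<eta> * (u - t)) - c u * exp (\<eta> * (u - t)))"
          by (rule ext) (rule left_diff_distrib)
        then show ?thesis using set_integral_diff(2)[OF si1 si2] by simp
      qed
      have "cm t = habit \<epsilon> \<eta> \<tau> c0 cm t" using cm t unfolding is_cm_def by blast
      moreover have "habit \<epsilon> \<eta> \<tau> c0 c t \<le> c t" using h t by blast
      ultimately have "cm t - c t \<le> habit \<epsilon> \<eta> \<tau> c0 cm t - habit \<epsilon> \<eta> \<tau> c0 c t"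
        by linarith
      also have "\<dots> = \<epsilon> * (LBINT u:{max 0 (t-\<tau>)..t}. (cm u - c u) * exp (\<eta> * (u - t)))"
        unfolding eq habit_split[OF hc0 hcm t less_imp_le[OF \<eta>]] habit_split[OF hc0 hc t less_imp_le[OF \<eta>]]
        by (simp add: right_diff_distrib)
      also have "\<dots> \<le> \<epsilon> * (LBINT u:{0..t}. n u)"
        unfolding n_def using win_bound[OF i t, of \<eta> \<tau>] e \<eta> by (intro mult_left_mono) auto
      finally show "n t \<le> \<epsilon> * (LBINT u:{0..t}. n u)"
        using e set_int_nonneg[of "{0..t}" n] by (simp add: n_def)
    qed
  qed
  then show ?thesis
  proof (rule eventually_mono, intro impI)
    fix t :: real assume h: "0 \<le> t \<longrightarrow> n t = 0" and t: "0 \<le> t"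
    have "cm t - c t \<le> n t" unfolding n_def by (rule max.cobounded2)
    then show "cm t \<le> c t" using h t by linarith
  qed
qed

lemma kM_eq: "kM A \<delta> k0 cm t = capital A \<delta> k0 cm t"
proof -
  have e: "exp ((A-\<delta>)*(t-u)) = exp ((A-\<delta>)*t) * exp (-(A-\<delta>)*u)" for u
  proof -
    have "(A-\<delta>)*(t-u) = (A-\<delta>)*t + (-(A-\<delta>)*u)" by (simp add: algebra_simps)
    then show ?thesis by (simp only: exp_add)
  qed
  have p: "exp ((A-\<delta>)*(t-u)) * cm u = exp ((A-\<delta>)*t) * (cm u * exp (-(A-\<delta>)*u))" for u
    unfolding e by (simp only: mult_ac)
  have "(LBINT u:{0..t}. exp ((A-\<delta>)*(t-u)) * cm u) = exp ((A-\<delta>)*t) * (LBINT u:{0..t}. cm u * exp (-(A-\<delta>)*u))"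
    unfolding p by (rule set_integral_mult_right)
  then show ?thesis unfolding kM_def capital_def by (simp add: algebra_simps)
qed

lemma capital_mono:
  assumes "L1loc c1" "L1loc c2" "AE u in lborel. 0 \<le> u \<longrightarrow> c1 u \<le> c2 u"
  shows "capital A \<delta> k0 c2 t \<le> capital A \<delta> k0 c1 t"
proof -
  have "(LBINT u:{0..t}. exp ((A - \<delta>) * (t - u)) * c1 u) \<le> (LBINT u:{0..t}. exp ((A - \<delta>) * (t - u)) * c2 u)"
  proof (rule set_integral_mono_AE)
    show "set_integrable lborel {0..t} (\<lambda>u. exp ((A - \<delta>) * (t - u)) * c1 u)"
      by (intro si_mult_cont L1loc_empty assms continuous_intros)
    show "set_integrable lborel {0..t} (\<lambda>u. exp ((A - \<delta>) * (t - u)) * c2 u)"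
      by (intro si_mult_cont L1loc_empty assms continuous_intros)
    show "AE x\<in>{0..t} in lborel. exp ((A - \<delta>) * (t - x)) * c1 x \<le> exp ((A - \<delta>) * (t - x)) * c2 x"
      using assms(3) by (auto elim!: eventually_mono)
  qed
  then show ?thesis unfolding capital_def by simp
qed

lemma part12:
  assumes e: "\<epsilon> > 0" and \<eta>: "\<eta> > 0"
    and c0: "L1_nonneg_init \<tau> c0"
    and cm: "is_cm \<epsilon> \<eta> \<tau> c0 cm"
  shows "(admissible A \<delta> \<epsilon> \<eta> \<tau> k0 c0 \<noteq> {} \<longleftrightarrow> cm \<in> admissible A \<delta> \<epsilon> \<eta> \<tau> k0 c0)
       \<and> (admissible A \<delta> \<epsilon> \<eta> \<tau> k0 c0 \<noteq> {} \<longleftrightarrow> (\<forall>t\<ge>0. kM A \<delta> k0 cm t \<ge> 0))"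
proof -
  have hcm: "L1loc cm" using cm by (simp add: is_cm_def)
  have nn: "AE t in lborel. 0 \<le> t \<longrightarrow> 0 \<le> cm t" by (rule cm_nonneg[OF c0 cm e \<eta>])
  have hfix: "\<And>t. 0 \<le> t \<Longrightarrow> habit \<epsilon> \<eta> \<tau> c0 cm t = cm t" using cm by (simp add: is_cm_def)
  have P1: "L1loc_nonneg cm" unfolding L1loc_nonneg_def using hcm nn by simp
  have P2: "AE t in lborel. 0 \<le> t \<longrightarrow> habit \<epsilon> \<eta> \<tau> c0 cm t \<le> cm t \<and> 0 \<le> habit \<epsilon> \<eta> \<tau> c0 cm t"
    using nn by (rule eventually_mono) (simp add: hfix)
  have memb: "cm \<in> admissible A \<delta> \<epsilon> \<eta> \<tau> k0 c0 \<longleftrightarrow> (\<forall>t\<ge>0. capital A \<delta> k0 cm t \<ge> 0)"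
    unfolding admissible_def using P1 P2 by simp
  have ne: "cm \<in> admissible A \<delta> \<epsilon> \<eta> \<tau> k0 c0" if ne0: "admissible A \<delta> \<epsilon> \<eta> \<tau> k0 c0 \<noteq> {}"
  proof -
    obtain c where c: "c \<in> admissible A \<delta> \<epsilon> \<eta> \<tau> k0 c0" using ne0 by blast
    have hc: "L1loc c" using c by (simp add: admissible_def L1loc_nonneg_def)
    have capc: "\<forall>t\<ge>0. capital A \<delta> k0 c t \<ge> 0" using c unfolding admissible_def by blast
    have le: "AE t in lborel. 0 \<le> t \<longrightarrow> cm t \<le> c t" by (rule cm_le_adm[OF c0 cm e \<eta> c])
    have "capital A \<delta> k0 cm t \<ge> 0" if "t \<ge> 0" for t
      using capital_mono[OF hcm hc le, of A \<delta> k0 t] capc that by (meson order_trans)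
    then show ?thesis using memb by blast
  qed
  have kk: "(\<forall>t\<ge>0. kM A \<delta> k0 cm t \<ge> 0) \<longleftrightarrow> (\<forall>t\<ge>0. capital A \<delta> k0 cm t \<ge> 0)"
    by (simp only: kM_eq)
  have q1: "admissible A \<delta> \<epsilon> \<eta> \<tau> k0 c0 \<noteq> {} \<longleftrightarrow> cm \<in> admissible A \<delta> \<epsilon> \<eta> \<tau> k0 c0"
    using ne by blast
  show ?thesis using q1 memb kk by simp
qed



lemma F_closed:
  fixes x \<tau> :: real
  assumes "0 < \<tau>" "x \<noteq> 0"
  shows "(LBINT u:{-\<tau>..0}. exp (x*u)) = (1 - exp (-x*\<tau>)) / x"
proof -
  have "(LBINT u:{-\<tau>..0}. exp (x*u)) = (\<lambda>u. exp (x*u) / x) 0 - (\<lambda>u. exp (x*u) / x) (-\<tau>)"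
    unfolding set_lebesgue_integral_def
  proof (rule integral_FTC_atLeastAtMost[where F="\<lambda>u. exp (x*u) / x" and f="\<lambda>u. exp (x*u)"])
    show "-\<tau> \<le> 0" using assms by simp
    fix u :: real
    have "((\<lambda>u. exp (x*u) / x) has_real_derivative (exp (x*u) * (x * 1)) / x) (at u)"
      using assms by (intro derivative_eq_intros) auto
    then have "((\<lambda>u. exp (x*u) / x) has_real_derivative exp (x*u)) (at u)"
      using assms by simp
    then show "((\<lambda>u. exp (x*u) / x) has_vector_derivative exp (x*u)) (at u within {-\<tau>..0})"
      by (simp add: has_real_derivative_iff_has_vector_derivative[symmetric] has_field_derivative_at_within)
  qed (intro continuous_intros)
  then show ?thesis by (simp add: diff_divide_distrib)
qed

lemma F_zero:
  fixes \<tau> :: real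
  assumes "0 < \<tau>"
  shows "(LBINT u:{-\<tau>..0}. exp (0*u)) = \<tau>"
proof -
  have "(LBINT u:{-\<tau>..0}. exp (0*u)) = (\<lambda>u. u) 0 - (\<lambda>u. u) (-\<tau>)"
    unfolding set_lebesgue_integral_def
  proof (rule integral_FTC_atLeastAtMost[where F="\<lambda>u. u" and f="\<lambda>u. exp (0*u)"])
    show "-\<tau> \<le> 0" using assms by simp
    fix u :: real
    show "((\<lambda>u. u) has_vector_derivative exp (0*u)) (at u within {-\<tau>..0})"
      by (simp add: has_real_derivative_iff_has_vector_derivative[symmetric])
  qed (intro continuous_intros)
  then show ?thesis by simp
qed

definition Gf :: "real \<Rightarrow> real \<Rightarrow> real" where
  "Gf \<tau> x = (if x = 0 then \<tau> else (1 - exp (-x*\<tau>)) / x)"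

lemma F_Gf: "0 < (\<tau>::real) \<Longrightarrow> (LBINT u:{-\<tau>..0}. exp ((x::real)*u)) = Gf \<tau> x"
  unfolding Gf_def using F_closed F_zero by auto

lemma Gf_cont: "continuous_on UNIV (Gf \<tau>)"
proof -
  have "isCont (Gf \<tau>) x" for x
  proof (cases "x = 0")
    case True
    have d: "((\<lambda>y. - exp (-y*\<tau>)) has_field_derivative (- (exp (-0*\<tau>) * (- (1::real) * \<tau>)))) (at 0)"
      by (intro derivative_eq_intros) auto
    then have "((\<lambda>y. ((- exp (-y*\<tau>)) - (- exp (-0*\<tau>))) / (y - 0)) \<longlongrightarrow> \<tau>) (at 0)"
      unfolding has_field_derivative_iff by simp
    moreover have "\<forall>\<^sub>F y in at 0. ((- exp (-y*\<tau>)) - (- exp (-0*\<tau>))) / (y - 0) = Gf \<tau> y"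
      unfolding eventually_at_filter by (auto simp: Gf_def)
    ultimately have "(Gf \<tau> \<longlongrightarrow> \<tau>) (at 0)" by (rule Lim_transform_eventually)
    then show ?thesis using True by (simp add: isCont_def Gf_def)
  next
    case False
    have "\<forall>\<^sub>F y in nhds x. (1 - exp (-y*\<tau>)) / y = Gf \<tau> y"
      using t1_space_nhds[OF False] by (rule eventually_mono) (simp add: Gf_def)
    moreover have "isCont (\<lambda>y. (1 - exp (-y*\<tau>)) / y) x" using False by (intro continuous_intros) auto
    ultimately show ?thesis using isCont_cong[of "\<lambda>y. (1 - exp (-y*\<tau>)) / y" "Gf \<tau>" x] by blast
  qed
  then show ?thesis by (simp add: continuous_at_imp_continuous_on)
qed

lemma F_inj:
  fixes x1 x2 \<tau> :: real
  assumes "0 < \<tau>" "x1 < x2"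
  shows "(LBINT u:{-\<tau>..0}. exp (x1*u)) \<noteq> (LBINT u:{-\<tau>..0}. exp (x2*u))"
proof
  assume eq: "(LBINT u:{-\<tau>..0}. exp (x1*u)) = (LBINT u:{-\<tau>..0}. exp (x2*u))"
  define f where "f = (\<lambda>u. indicator {-\<tau>..0} u *\<^sub>R (exp (x1*u) - exp (x2*u)))"
  have i1: "set_integrable lborel {-\<tau>..0} (\<lambda>u. exp (x1*u))" by (intro borel_integrable_atLeastAtMost' continuous_intros)
  have i2: "set_integrable lborel {-\<tau>..0} (\<lambda>u. exp (x2*u))" by (intro borel_integrable_atLeastAtMost' continuous_intros)
  have fi: "integrable lborel f" unfolding f_def using set_integral_diff(1)[OF i1 i2] by (simp add: set_integrable_def)
  have "{-\<tau>..0} \<in> null_sets lborel"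
  proof (rule null_if_pos_func_has_zero_int[OF fi])
    show "{-\<tau>..0} \<in> sets lborel" by simp
    show "AE x\<in>{-\<tau>..0} in lborel. 0 < f x"
      using AE_lborel_singleton[of 0]
    proof (rule eventually_mono, intro impI)
      fix u :: real assume "u \<noteq> 0" "u \<in> {-\<tau>..0}"
      then have "u < 0" by auto
      then have "x2 * u < x1 * u" using assms by simp
      then show "0 < f u" using \<open>u \<in> _\<close> by (simp add: f_def)
    qed
    have "(LINT x:{-\<tau>..0}|lborel. f x) = (LBINT u:{-\<tau>..0}. exp (x1*u) - exp (x2*u))"
      by (rule set_lebesgue_integral_cong) (auto simp: f_def)
    also have "\<dots> = 0" using set_integral_diff(2)[OF i1 i2] eq by simp
    finally show "(LINT x:{-\<tau>..0}|lborel. f x) = 0" .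
  qed
  then have "emeasure lborel {-\<tau>..0} = 0" by auto
  then show False using assms by simp
qed

lemma exp_quad: "0 \<le> z \<Longrightarrow> 1 + z + z^2/4 \<le> exp (z::real)"
proof -
  assume "0 \<le> z"
  have "1 + z/2 \<le> exp (z/2)" by (rule exp_ge_add_one_self)
  then have "(1 + z/2)^2 \<le> exp (z/2)^2" using \<open>0 \<le> z\<close> by (intro power_mono) auto
  also have "exp (z/2)^2 = exp z" by (simp add: power2_eq_square mult_exp_exp)
  finally show ?thesis by (simp add: power2_eq_square field_simps)
qed

lemma F_exists:
  assumes "0 < \<tau>" "0 < \<epsilon>"
  shows "\<exists>x. Gf \<tau> x = 1/\<epsilon>"
proof (cases "\<epsilon> * \<tau> \<ge> 1")
  case True
  have "Gf \<tau> (2*\<epsilon>) \<le> 1/\<epsilon>"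
  proof -
    have "Gf \<tau> (2*\<epsilon>) = (1 - exp (-(2*\<epsilon>)*\<tau>)) / (2*\<epsilon>)" using assms by (simp add: Gf_def)
    also have "\<dots> \<le> 1 / (2*\<epsilon>)" using assms by (intro divide_right_mono) auto
    also have "\<dots> \<le> 1/\<epsilon>" using assms by (simp add: field_simps)
    finally show ?thesis .
  qed
  moreover have "1/\<epsilon> \<le> Gf \<tau> 0" using True assms by (simp add: Gf_def field_simps)
  ultimately show ?thesis using IVT2'[of "Gf \<tau>" "2*\<epsilon>" "1/\<epsilon>" 0] assms
    by (auto intro: continuous_on_subset[OF Gf_cont])
next
  case False
  define y where "y = 4 / (\<epsilon> * \<tau>^2)"
  have y: "0 < y" using assms by (simp add: y_def)
  have "1/\<epsilon> \<le> Gf \<tau> (-y)"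
  proof -
    have "1 + y*\<tau> + (y*\<tau>)^2/4 \<le> exp (y*\<tau>)" using y assms by (intro exp_quad) simp
    then have "(y*\<tau> + (y*\<tau>)^2/4) / y \<le> (exp (y*\<tau>) - 1) / y" using y by (intro divide_right_mono) auto
    moreover have "(y*\<tau> + (y*\<tau>)^2/4) / y = \<tau> + 1/\<epsilon>" using y assms by (simp add: y_def field_simps power2_eq_square)
    moreover have "Gf \<tau> (-y) = (exp (y*\<tau>) - 1) / y" using y by (simp add: Gf_def field_simps)
    ultimately show ?thesis using assms by simp
  qed
  moreover have "Gf \<tau> 0 \<le> 1/\<epsilon>" using False assms by (simp add: Gf_def field_simps)
  ultimately show ?thesis using IVT2'[of "Gf \<tau>" 0 "1/\<epsilon>" "-y"] y
    by (auto intro: continuous_on_subset[OF Gf_cont])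
qed

lemma lambda0_prop:
  assumes "0 < \<tau>" "0 < \<epsilon>"
  shows "1 = \<epsilon> * (LBINT u:{-\<tau>..0}. exp ((lambda0 \<epsilon> \<eta> \<tau> + \<eta>) * u))"
proof -
  obtain x where x: "Gf \<tau> x = 1/\<epsilon>" using F_exists[OF assms] by blast
  have ex: "1 = \<epsilon> * (LBINT u:{-\<tau>..0}. exp ((x - \<eta> + \<eta>) * u))"
    using x assms F_Gf[OF assms(1), of x] by simp
  have uq: "l = x - \<eta>" if "1 = \<epsilon> * (LBINT u:{-\<tau>..0}. exp ((l + \<eta>) * u))" for l
  proof (rule ccontr)
    assume ne: "l \<noteq> x - \<eta>"
    have e: "(LBINT u:{-\<tau>..0}. exp ((l + \<eta>) * u)) = (LBINT u:{-\<tau>..0}. exp ((x - \<eta> + \<eta>) * u))"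
      using that ex assms by (metis mult_cancel_left less_irrefl)
    show False
    proof (cases "l < x - \<eta>")
      case True then show ?thesis using F_inj[OF assms(1), of "l+\<eta>" "x - \<eta> + \<eta>"] e by simp
    next
      case False then have "x - \<eta> < l" using ne by simp
      then show ?thesis using F_inj[OF assms(1), of "x - \<eta> + \<eta>" "l+\<eta>"] e by simp
    qed
  qed
  have "\<exists>!l. 1 = \<epsilon> * (LBINT u:{-\<tau>..0}. exp ((l + \<eta>) * u))" using ex uq by blast
  then show ?thesis unfolding lambda0_def by (rule theI')
qed

lemma exp_window:
  fixes x t \<tau> :: real
  shows "(LBINT u:{t-\<tau>..t}. exp (x*(u-t))) = (LBINT u:{-\<tau>..0}. exp (x*u))"
proof -
  have "(LBINT u:{t-\<tau>..t}. exp (x*(u-t))) = \<bar>1::real\<bar> *\<^sub>R integral\<^sup>L lborel (\<lambda>w. indicator {t-\<tau>..t} (t + 1 * w) *\<^sub>R exp (x*((t+1 * w)-t)))"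
    unfolding set_lebesgue_integral_def by (rule lborel_integral_real_affine) simp
  also have "\<dots> = (LBINT u:{-\<tau>..0}. exp (x*u))"
    unfolding set_lebesgue_integral_def
    by (simp only: abs_one scaleR_one) (auto intro!: Bochner_Integration.integral_cong split: split_indicator)
  finally show ?thesis .
qed

lemma phi_fix:
  fixes \<epsilon> \<tau> l \<eta> a t :: real
  assumes "1 = \<epsilon> * (LBINT u:{-\<tau>..0}. exp ((l + \<eta>) * u))"
  shows "\<epsilon> * (LBINT u:{t-\<tau>..t}. (a * exp (l*u)) * exp (\<eta>*(u-t))) = a * exp (l*t)"
proof -
  have p: "(a * exp (l*u)) * exp (\<eta>*(u-t)) = (a * exp (l*t)) * exp ((l+\<eta>)*(u-t))" for u
  proof -
    have "l*u + \<eta>*(u-t) = l*t + (l+\<eta>)*(u-t)" by (simp add: algebra_simps)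
    then have "exp (l*u) * exp (\<eta>*(u-t)) = exp (l*t) * exp ((l+\<eta>)*(u-t))" by (simp only: mult_exp_exp)
    then show ?thesis by (simp add: mult.assoc)
  qed
  have "\<epsilon> * (LBINT u:{t-\<tau>..t}. (a * exp (l*u)) * exp (\<eta>*(u-t)))
      = (a * exp (l*t)) * (\<epsilon> * (LBINT u:{-\<tau>..0}. exp ((l+\<eta>)*u)))"
    unfolding p set_integral_mult_right exp_window by simp
  then show ?thesis using assms by simp
qed



lemma pos_window:
  fixes \<tau> :: real and c0 :: "real \<Rightarrow> real"
  assumes \<tau>: "0 < \<tau>" and c0: "L1_nonneg_init \<tau> c0"
    and pos: "emeasure lborel {u \<in> {-\<tau>..<0}. c0 u > 0} > 0"
  shows "\<exists>s0. -\<tau> < s0 \<and> s0 < 0 \<and> 0 < (LBINT u:{s0..<0}. c0 u)"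
proof -
  have hc0: "set_integrable lborel {-\<tau>..<0} c0" using c0 by (simp add: L1_nonneg_init_def)
  have c0nn: "AE u in lborel. u \<in> {-\<tau>..<0} \<longrightarrow> 0 \<le> c0 u" using c0 by (simp add: L1_nonneg_init_def)
  define g where "g = (\<lambda>u. indicator {-\<tau>..<0} u *\<^sub>R c0 u)"
  have gm[measurable]: "g \<in> borel_measurable lborel"
    using hc0 unfolding g_def set_integrable_def by (rule borel_measurable_integrable)
  define E where "E = (\<lambda>n::nat. {u. 0 < g u} \<inter> {-\<tau> + 1 / real (Suc n)..<0})"
  have Es: "E n \<in> sets lborel" for n unfolding E_def by measurable
  have "\<exists>n. E n \<notin> null_sets lborel"
  proof (rule ccontr)
    assume "\<not> (\<exists>n. E n \<notin> null_sets lborel)"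
    then have "\<And>n. E n \<in> null_sets lborel" by blast
    then have N: "{-\<tau>} \<union> (\<Union>n. E n) \<in> null_sets lborel"
      by (intro null_sets.Un null_sets_UN) (auto intro: null_setsI)
    have "{u \<in> {-\<tau>..<0}. c0 u > 0} \<subseteq> {-\<tau>} \<union> (\<Union>n. E n)"
    proof
      fix u assume u: "u \<in> {u \<in> {-\<tau>..<0}. c0 u > 0}"
      show "u \<in> {-\<tau>} \<union> (\<Union>n. E n)"
      proof (cases "u = -\<tau>")
        case False
        then have "0 < u + \<tau>" using u by auto
        then obtain m :: nat where m: "m > 0" "inverse (real m) < u + \<tau>"
          using ex_inverse_of_nat_less by blast
        then have "Suc (m - 1) = m" by simp
        then have "u \<in> E (m - 1)" using u m unfolding E_def g_def
          by (auto simp: divide_inverse)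
        then show ?thesis by blast
      qed simp
    qed
    then have "emeasure lborel {u \<in> {-\<tau>..<0}. c0 u > 0} \<le> emeasure lborel ({-\<tau>} \<union> (\<Union>n. E n))"
      using N by (intro emeasure_mono) auto
    then show False using N pos by auto
  qed
  then obtain n where n: "E n \<notin> null_sets lborel" by blast
  define s0 where "s0 = -\<tau> + 1 / real (Suc n)"
  have "E n \<noteq> {}" using n by auto
  then have s0: "-\<tau> < s0" "s0 < 0" unfolding s0_def E_def by auto
  have sub: "{s0..<0} \<subseteq> {-\<tau>..<0}" using s0 by auto
  have hs: "set_integrable lborel {s0..<0} c0" by (rule set_integrable_subset[OF hc0 _ sub]) auto
  have "0 < (LBINT u:{s0..<0}. c0 u)"
  proof (rule ccontr)
    assume "\<not> 0 < (LBINT u:{s0..<0}. c0 u)"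
    moreover have "0 \<le> (LBINT u:{s0..<0}. c0 u)"
      unfolding set_lebesgue_integral_def using c0nn sub
      by (intro integral_nonneg_AE) (auto elim!: eventually_mono split: split_indicator)
    ultimately have z: "integral\<^sup>L lborel (\<lambda>u. indicator {s0..<0} u *\<^sub>R c0 u) = 0"
      unfolding set_lebesgue_integral_def by simp
    have "AE u in lborel. indicator {s0..<0} u *\<^sub>R c0 u = 0"
    proof (subst integral_nonneg_eq_0_iff_AE[symmetric])
      show "integrable lborel (\<lambda>u. indicator {s0..<0} u *\<^sub>R c0 u)" using hs by (simp add: set_integrable_def)
      show "AE u in lborel. 0 \<le> indicator {s0..<0} u *\<^sub>R c0 u"
        using c0nn sub by (auto elim!: eventually_mono split: split_indicator)
    qed (rule z)
    then have "AE u in lborel. u \<notin> E n"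
    proof (rule eventually_mono)
      fix u assume h: "indicator {s0..<0} u *\<^sub>R c0 u = 0"
      show "u \<notin> E n"
      proof
        assume "u \<in> E n"
        then have "u \<in> {s0..<0}" "0 < g u" unfolding E_def s0_def by auto
        then show False using h sub unfolding g_def by (auto split: split_indicator)
      qed
    qed
    then have "E n \<in> null_sets lborel" using Es by (simp add: AE_iff_null_sets)
    then show False using n by blast
  qed
  then show ?thesis using s0 by blast
qed



lemma set_int_subset_mono_AE:
  fixes f :: "real \<Rightarrow> real"
  assumes "set_integrable lborel B f" "A \<subseteq> B" "A \<in> sets lborel" "AE x in lborel. x \<in> B \<longrightarrow> 0 \<le> f x"
  shows "(LBINT x:A. f x) \<le> (LBINT x:B. f x)"
proof -
  have "set_integrable lborel A f" using assms set_integrable_subset by blast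
  then show ?thesis using assms unfolding set_integrable_def set_lebesgue_integral_def
    by (intro integral_mono_AE) (auto elim!: eventually_mono split: split_indicator)
qed

lemma set_int_const:
  assumes "0 \<le> d"
  shows "(LBINT u:{0..d}. (b::real)) = b * d"
proof -
  have "(LBINT u:{0..d}. b) = (LBINT u:{0..d}. b * u ^ 0)" by simp
  also have "\<dots> = b * (LBINT u:{0..d}. u ^ 0)" by (rule set_integral_mult_right)
  also have "\<dots> = b * d" using int_power_0[OF assms, of 0] by simp
  finally show ?thesis .
qed

lemma lower_exp:
  fixes f :: "real \<Rightarrow> real"
  assumes f: "set_integrable lborel S f" and nn: "AE u in lborel. u \<in> S \<longrightarrow> 0 \<le> f u"
    and S: "\<And>u. u \<in> S \<Longrightarrow> t - \<tau> \<le> u \<and> u \<le> t" and \<eta>: "0 \<le> \<eta>"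
  shows "exp (-\<eta>*\<tau>) * (LBINT u:S. f u) \<le> (LBINT u:S. f u * exp (\<eta>*(u-t)))"
proof -
  have "exp (-\<eta>*\<tau>) * (LBINT u:S. f u) = (LBINT u:S. exp (-\<eta>*\<tau>) * f u)"
    by (rule set_integral_mult_right[symmetric])
  also have "\<dots> \<le> (LBINT u:S. f u * exp (\<eta>*(u-t)))"
  proof (rule set_integral_mono_AE)
    show "set_integrable lborel S (\<lambda>u. exp (-\<eta>*\<tau>) * f u)" using f by simp
    show "set_integrable lborel S (\<lambda>u. f u * exp (\<eta>*(u-t)))"
      by (rule si_mult_exp[OF f]) (use S \<eta> in auto)
    show "AE u\<in>S in lborel. exp (-\<eta>*\<tau>) * f u \<le> f u * exp (\<eta>*(u-t))"
      using nn
    proof (rule eventually_mono, intro impI)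
      fix u assume h: "u \<in> S \<longrightarrow> 0 \<le> f u" and u: "u \<in> S"
      have "\<eta>*(-\<tau>) \<le> \<eta>*(u-t)" using S[OF u] \<eta> by (intro mult_left_mono) auto
      then have "-\<eta>*\<tau> \<le> \<eta>*(u-t)" by simp
      then have "exp (-\<eta>*\<tau>) \<le> exp (\<eta>*(u-t))" by simp
      then have "f u * exp (-\<eta>*\<tau>) \<le> f u * exp (\<eta>*(u-t))"
        using h u by (intro mult_left_mono) auto
      then show "exp (-\<eta>*\<tau>) * f u \<le> f u * exp (\<eta>*(u-t))"
        by (simp add: mult.commute)
    qed
  qed
  finally show ?thesis .
qed

lemma window:
  fixes \<tau> \<epsilon> \<eta> :: real and c0 c :: "real \<Rightarrow> real"
  assumes \<tau>: "0 < \<tau>" and e: "0 < \<epsilon>" and \<eta>: "0 < \<eta>" and c0: "L1_nonneg_init \<tau> c0"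
    and pos: "emeasure lborel {u \<in> {-\<tau>..<0}. c0 u > 0} > 0"
    and hc: "L1loc c" and cnn: "AE t in lborel. 0 \<le> t \<longrightarrow> 0 \<le> c t"
    and hab: "AE t in lborel. 0 \<le> t \<longrightarrow> habit \<epsilon> \<eta> \<tau> c0 c t \<le> c t"
  shows "\<exists>b>0. AE t in lborel. 0 \<le> t \<and> t \<le> \<tau> \<longrightarrow> b \<le> c t"
proof -
  have hc0: "set_integrable lborel {-\<tau>..<0} c0" using c0 by (simp add: L1_nonneg_init_def)
  have c0nn: "AE u in lborel. u \<in> {-\<tau>..<0} \<longrightarrow> 0 \<le> c0 u" using c0 by (simp add: L1_nonneg_init_def)
  obtain s0 where s0: "-\<tau> < s0" "s0 < 0" and \<beta>: "0 < (LBINT u:{s0..<0}. c0 u)"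
    using pos_window[OF \<tau> c0 pos] by blast
  define \<beta> where "\<beta> = (LBINT u:{s0..<0}. c0 u)"
  define d where "d = s0 + \<tau>"
  have d: "0 < d" "d < \<tau>" using s0 by (auto simp: d_def)
  define b1 where "b1 = \<epsilon> * exp (-\<eta>*\<tau>) * \<beta>"
  define b2 where "b2 = \<epsilon> * exp (-\<eta>*\<tau>) * (b1 * d)"
  have b1: "0 < b1" using e \<beta> by (simp add: b1_def \<beta>_def)
  have b2: "0 < b2" using e b1 d by (simp add: b2_def)
  have dec: "\<epsilon> * exp (-\<eta>*\<tau>) * (LBINT u:{t-\<tau>..<0}. c0 u) + \<epsilon> * exp (-\<eta>*\<tau>) * (LBINT u:{0..t}. c u) \<le> c t"
    if t: "0 \<le> t" "t \<le> \<tau>" and h: "habit \<epsilon> \<eta> \<tau> c0 c t \<le> c t" for t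
  proof -
    have s1: "set_integrable lborel {t-\<tau>..<0} c0" by (rule set_integrable_subset[OF hc0]) (use t in auto)
    have l1: "exp (-\<eta>*\<tau>) * (LBINT u:{t-\<tau>..<0}. c0 u) \<le> (LBINT u:{t-\<tau>..<0}. c0 u * exp (\<eta>*(u-t)))"
      by (rule lower_exp[OF s1]) (use c0nn t \<eta> in \<open>auto elim!: eventually_mono\<close>)
    have m: "max 0 (t-\<tau>) = 0" using t by simp
    have l2: "exp (-\<eta>*\<tau>) * (LBINT u:{0..t}. c u) \<le> (LBINT u:{0..t}. c u * exp (\<eta>*(u-t)))"
      by (rule lower_exp[OF L1loc_empty[OF hc]]) (use cnn t \<eta> in \<open>auto elim!: eventually_mono\<close>)
    have "habit \<epsilon> \<eta> \<tau> c0 c t = \<epsilon> * (LBINT u:{t-\<tau>..<0}. c0 u * exp (\<eta>*(u-t))) + \<epsilon> * (LBINT u:{0..t}. c u * exp (\<eta>*(u-t)))"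
      using habit_split[OF hc0 hc t(1) less_imp_le[OF \<eta>], of \<epsilon>] unfolding m .
    then show ?thesis using l1 l2 h e by (smt (verit) mult_left_mono mult.assoc)
  qed
  have int_nn: "0 \<le> (LBINT u:S. c u)" if "S \<subseteq> {0..}" for S
    unfolding set_lebesgue_integral_def using cnn that
    by (intro integral_nonneg_AE) (auto elim!: eventually_mono split: split_indicator)
  have int0_nn: "0 \<le> (LBINT u:S. c0 u)" if "S \<subseteq> {-\<tau>..<0}" for S
    unfolding set_lebesgue_integral_def using c0nn that
    by (intro integral_nonneg_AE) (auto elim!: eventually_mono split: split_indicator)
  have W1: "AE t in lborel. 0 \<le> t \<and> t \<le> d \<longrightarrow> b1 \<le> c t"
    using hab
  proof (rule eventually_mono, intro impI)
    fix t assume h: "0 \<le> t \<longrightarrow> habit \<epsilon> \<eta> \<tau> c0 c t \<le> c t" and t: "0 \<le> t \<and> t \<le> d"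
    have "\<beta> \<le> (LBINT u:{t-\<tau>..<0}. c0 u)" unfolding \<beta>_def
      by (rule set_int_subset_mono_AE[OF set_integrable_subset[OF hc0]]) (use t d c0nn in \<open>auto simp: d_def elim!: eventually_mono\<close>)
    moreover have "0 \<le> (LBINT u:{0..t}. c u)" by (rule int_nn) auto
    ultimately have "b1 \<le> \<epsilon> * exp (-\<eta>*\<tau>) * (LBINT u:{t-\<tau>..<0}. c0 u) + \<epsilon> * exp (-\<eta>*\<tau>) * (LBINT u:{0..t}. c u)"
      unfolding b1_def using e by (simp add: mult_left_mono add_increasing2)
    also have "\<dots> \<le> c t" using dec[of t] t h d by auto
    finally show "b1 \<le> c t" .
  qed
  have W2: "AE t in lborel. d \<le> t \<and> t \<le> \<tau> \<longrightarrow> b2 \<le> c t"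
    using hab
  proof (rule eventually_mono, intro impI)
    fix t assume h: "0 \<le> t \<longrightarrow> habit \<epsilon> \<eta> \<tau> c0 c t \<le> c t" and t: "d \<le> t \<and> t \<le> \<tau>"
    have "b1 * d = (LBINT u:{0..d}. b1)" using set_int_const[of d b1] d by simp
    also have "\<dots> \<le> (LBINT u:{0..d}. c u)"
    proof (rule set_integral_mono_AE)
      show "set_integrable lborel {0..d} (\<lambda>u. b1)" by (intro borel_integrable_atLeastAtMost' continuous_intros)
      show "set_integrable lborel {0..d} c" by (rule L1loc_empty[OF hc])
      show "AE u\<in>{0..d} in lborel. b1 \<le> c u" using W1 by (auto elim!: eventually_mono)
    qed
    also have "\<dots> \<le> (LBINT u:{0..t}. c u)"
      by (rule set_int_subset_mono_AE[OF L1loc_empty[OF hc]]) (use t d cnn in \<open>auto elim!: eventually_mono\<close>)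
    finally have "b1 * d \<le> (LBINT u:{0..t}. c u)" .
    moreover have "0 \<le> (LBINT u:{t-\<tau>..<0}. c0 u)" by (rule int0_nn) (use t d in auto)
    ultimately have "b2 \<le> \<epsilon> * exp (-\<eta>*\<tau>) * (LBINT u:{t-\<tau>..<0}. c0 u) + \<epsilon> * exp (-\<eta>*\<tau>) * (LBINT u:{0..t}. c u)"
      unfolding b2_def using e by (simp add: mult_left_mono add_increasing)
    also have "\<dots> \<le> c t" using dec[of t] t h d by auto
    finally show "b2 \<le> c t" .
  qed
  have "AE t in lborel. 0 \<le> t \<and> t \<le> \<tau> \<longrightarrow> min b1 b2 \<le> c t"
    using W1 W2
  proof (eventually_elim, intro impI)
    fix t assume "0 \<le> t \<and> t \<le> d \<longrightarrow> b1 \<le> c t" "d \<le> t \<and> t \<le> \<tau> \<longrightarrow> b2 \<le> c t" "0 \<le> t \<and> t \<le> \<tau>"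
    then show "min b1 b2 \<le> c t" by (cases "t \<le> d") auto
  qed
  moreover have "0 < min b1 b2" using b1 b2 by simp
  ultimately show ?thesis by blast
qed



lemma part3_main:
  fixes A \<delta> \<epsilon> \<eta> \<tau> k0 :: real and c0 c :: "real \<Rightarrow> real"
  assumes \<tau>: "0 < \<tau>" and e: "0 < \<epsilon>" and \<eta>: "0 < \<eta>" and k0: "0 \<le> k0"
    and lam: "lambda0 \<epsilon> \<eta> \<tau> \<ge> A - \<delta>"
    and c0: "L1_nonneg_init \<tau> c0"
    and pos: "emeasure lborel {u \<in> {-\<tau>..<0}. c0 u > 0} > 0"
    and c: "c \<in> admissible A \<delta> \<epsilon> \<eta> \<tau> k0 c0"
  shows False
proof -
  have hc0: "set_integrable lborel {-\<tau>..<0} c0" using c0 by (simp add: L1_nonneg_init_def)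
  have hc: "L1loc c" using c by (simp add: admissible_def L1loc_nonneg_def)
  have cnn: "AE t in lborel. 0 \<le> t \<longrightarrow> 0 \<le> c t" using c by (simp add: admissible_def L1loc_nonneg_def)
  have hab: "AE t in lborel. 0 \<le> t \<longrightarrow> habit \<epsilon> \<eta> \<tau> c0 c t \<le> c t"
    using c by (auto simp: admissible_def elim!: eventually_mono)
  have cap: "\<forall>t\<ge>0. capital A \<delta> k0 c t \<ge> 0" using c unfolding admissible_def by blast
  define l where "l = lambda0 \<epsilon> \<eta> \<tau>"
  have root: "1 = \<epsilon> * (LBINT u:{-\<tau>..0}. exp ((l + \<eta>) * u))" unfolding l_def by (rule lambda0_prop[OF \<tau> e])
  obtain b where b: "0 < b" "AE t in lborel. 0 \<le> t \<and> t \<le> \<tau> \<longrightarrow> b \<le> c t"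
    using window[OF \<tau> e \<eta> c0 pos hc cnn hab] by blast
  define a where "a = b * min 1 (exp (-l*\<tau>))"
  have a: "0 < a" using b by (simp add: a_def)
  have a\<phi>: "a * exp (l*t) \<le> b" if t: "0 \<le> t" "t \<le> \<tau>" for t
  proof -
    have "min 1 (exp (-l*\<tau>)) * exp (l*t) \<le> 1"
    proof (cases "0 \<le> l")
      case True
      have "exp (-l*\<tau>) * exp (l*t) = exp (l*(t-\<tau>))" by (simp add: mult_exp_exp algebra_simps)
      also have "\<dots> \<le> 1" using True t by (simp add: mult_nonneg_nonpos)
      finally have "exp (-l*\<tau>) * exp (l*t) \<le> 1" .
      moreover have "min 1 (exp (-l*\<tau>)) * exp (l*t) \<le> exp (-l*\<tau>) * exp (l*t)"
        by (intro mult_right_mono) auto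
      ultimately show ?thesis by linarith
    next
      case False
      then have "exp (l*t) \<le> 1" using t by (simp add: mult_nonpos_nonneg)
      then show ?thesis by (intro mult_le_one) auto
    qed
    then have "b * (min 1 (exp (-l*\<tau>)) * exp (l*t)) \<le> b * 1" using b by (intro mult_left_mono) auto
    then show ?thesis by (simp add: a_def mult.assoc)
  qed
  define n where "n = (\<lambda>t. max 0 (a * exp (l*t) - c t))"
  have "AE t in lborel. 0 \<le> t \<longrightarrow> n t = 0"
  proof (rule gronwall)
    show "0 \<le> n t" for t by (simp add: n_def)
    show "set_integrable lborel {0..T} n" for T
      unfolding n_def by (intro si_max0 set_integral_diff(1) L1loc_empty[OF hc] borel_integrable_atLeastAtMost' continuous_intros)
    show "0 \<le> \<epsilon>" using e by simp
    show "AE t in lborel. 0 \<le> t \<longrightarrow> n t \<le> \<epsilon> * (LBINT u:{0..t}. n u)"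
      using hab b(2)
    proof (eventually_elim, intro impI)
      fix t assume h1: "0 \<le> t \<longrightarrow> habit \<epsilon> \<eta> \<tau> c0 c t \<le> c t" and h2: "0 \<le> t \<and> t \<le> \<tau> \<longrightarrow> b \<le> c t"
        and t: "0 \<le> t"
      have nn: "0 \<le> \<epsilon> * (LBINT u:{0..t}. n u)"
        using e set_int_nonneg[of "{0..t}" n] by (simp add: n_def)
      show "n t \<le> \<epsilon> * (LBINT u:{0..t}. n u)"
      proof (cases "t \<le> \<tau>")
        case True
        then have "n t = 0" using a\<phi>[OF t True] h2 t by (simp add: n_def)
        then show ?thesis using nn by simp
      next
        case False
        have m: "max 0 (t-\<tau>) = t-\<tau>" using False by simp
        have emp: "{t-\<tau>..<0} = {}" using False by auto
        have hs: "habit \<epsilon> \<eta> \<tau> c0 c t = \<epsilon> * (LBINT u:{t-\<tau>..t}. c u * exp (\<eta> * (u - t)))"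
          using habit_split[OF hc0 hc t less_imp_le[OF \<eta>], of \<epsilon>] unfolding m emp
          by (simp add: set_lebesgue_integral_def)
        have pf: "\<epsilon> * (LBINT u:{t-\<tau>..t}. (a * exp (l*u)) * exp (\<eta>*(u-t))) = a * exp (l*t)"
          by (rule phi_fix[OF root])
        have i1: "set_integrable lborel {t-\<tau>..t} (\<lambda>u. (a * exp (l*u)) * exp (\<eta>*(u-t)))"
          by (intro borel_integrable_atLeastAtMost' continuous_intros)
        have i2: "set_integrable lborel {t-\<tau>..t} (\<lambda>u. c u * exp (\<eta> * (u - t)))"
          by (rule si_mult_exp[OF L1loc_sub[OF hc]]) (use False \<eta> in auto)
        have ig: "set_integrable lborel {0..t} (\<lambda>u. a * exp (l*u) - c u)"
          by (intro set_integral_diff(1) L1loc_empty[OF hc] borel_integrable_atLeastAtMost' continuous_intros)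
        have eq: "(LBINT u:{t-\<tau>..t}. (a * exp (l*u) - c u) * exp (\<eta> * (u - t)))
            = (LBINT u:{t-\<tau>..t}. (a * exp (l*u)) * exp (\<eta>*(u-t))) - (LBINT u:{t-\<tau>..t}. c u * exp (\<eta> * (u - t)))"
        proof -
          have "(\<lambda>u. (a * exp (l*u) - c u) * exp (\<eta> * (u - t))) = (\<lambda>u. (a * exp (l*u)) * exp (\<eta>*(u-t)) - c u * exp (\<eta> * (u - t)))"
            by (rule ext) (rule left_diff_distrib)
          then show ?thesis using set_integral_diff(2)[OF i1 i2] by simp
        qed
        have "a * exp (l*t) - c t \<le> a * exp (l*t) - habit \<epsilon> \<eta> \<tau> c0 c t" using h1 t by simp
        also have "\<dots> = \<epsilon> * (LBINT u:{t-\<tau>..t}. (a * exp (l*u) - c u) * exp (\<eta> * (u - t)))"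
          unfolding eq hs pf[symmetric] by (simp add: right_diff_distrib)
        also have "\<dots> \<le> \<epsilon> * (LBINT u:{0..t}. n u)"
          using win_bound[OF ig t, of \<eta> \<tau>] e \<eta> unfolding m n_def by (intro mult_left_mono) auto
        finally show ?thesis using nn by (simp add: n_def)
      qed
    qed
  qed
  then have lb: "AE t in lborel. 0 \<le> t \<longrightarrow> a * exp ((A-\<delta>)*t) \<le> c t"
  proof (rule eventually_mono, intro impI)
    fix t :: real assume h: "0 \<le> t \<longrightarrow> n t = 0" and t: "0 \<le> t"
    have "a * exp (l*t) - c t \<le> n t" unfolding n_def by (rule max.cobounded2)
    then have "a * exp (l*t) \<le> c t" using h t by linarith
    moreover have "(A-\<delta>)*t \<le> l*t" using lam t unfolding l_def by (intro mult_right_mono) auto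
    then have "a * exp ((A-\<delta>)*t) \<le> a * exp (l*t)" using a by (intro mult_left_mono) auto
    ultimately show "a * exp ((A-\<delta>)*t) \<le> c t" by linarith
  qed
  define T where "T = k0 / a + 1"
  have "0 \<le> k0 / a" using k0 a by (intro divide_nonneg_pos) auto
  then have T: "0 < T" by (simp add: T_def)
  have "a * exp ((A-\<delta>)*T) * T = (LBINT u:{0..T}. a * exp ((A-\<delta>)*T))"
    using set_int_const[of T "a * exp ((A-\<delta>)*T)"] T by (simp only: less_imp_le eq_commute)
  also have "\<dots> \<le> (LBINT u:{0..T}. exp ((A - \<delta>) * (T - u)) * c u)"
  proof (rule set_integral_mono_AE)
    show "set_integrable lborel {0..T} (\<lambda>u. a * exp ((A-\<delta>)*T))"
      by (intro borel_integrable_atLeastAtMost' continuous_intros)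
    show "set_integrable lborel {0..T} (\<lambda>u. exp ((A - \<delta>) * (T - u)) * c u)"
      by (intro si_mult_cont L1loc_empty[OF hc] continuous_intros)
    show "AE u\<in>{0..T} in lborel. a * exp ((A-\<delta>)*T) \<le> exp ((A - \<delta>) * (T - u)) * c u"
      using lb
    proof (rule eventually_mono, intro impI)
      fix u assume h: "0 \<le> u \<longrightarrow> a * exp ((A-\<delta>)*u) \<le> c u" and u: "u \<in> {0..T}"
      have "exp ((A - \<delta>) * (T - u)) * exp ((A-\<delta>)*u) = exp ((A-\<delta>)*T)"
        by (simp add: mult_exp_exp algebra_simps)
      then have "a * exp ((A-\<delta>)*T) = exp ((A - \<delta>) * (T - u)) * (a * exp ((A-\<delta>)*u))"
        by (simp add: ac_simps)
      also have "\<dots> \<le> exp ((A - \<delta>) * (T - u)) * c u" using h u by (intro mult_left_mono) auto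
      finally show "a * exp ((A-\<delta>)*T) \<le> exp ((A - \<delta>) * (T - u)) * c u" .
    qed
  qed
  also have "\<dots> \<le> k0 * exp ((A-\<delta>)*T)" using cap T unfolding capital_def by auto
  finally have "exp ((A-\<delta>)*T) * (a * T) \<le> exp ((A-\<delta>)*T) * k0" by (simp add: ac_simps)
  then have "a * T \<le> k0" by simp
  moreover have "a * T = k0 + a" using a by (simp add: T_def field_simps)
  ultimately show False using a by simp
qed


theorem mainTheorem3:
  fixes A \<delta> \<epsilon> \<eta> \<tau> k0 :: real and c0 cm :: "real \<Rightarrow> real"
  assumes "A > 0" "\<delta> > 0" "\<epsilon> > 0" "\<eta> > 0" "\<tau> > 0"
    and "k0 \<ge> 0"
    and "L1_nonneg_init \<tau> c0"
    and "is_cm \<epsilon> \<eta> \<tau> c0 cm"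
  shows "(admissible A \<delta> \<epsilon> \<eta> \<tau> k0 c0 \<noteq> {} \<longleftrightarrow> cm \<in> admissible A \<delta> \<epsilon> \<eta> \<tau> k0 c0)
       \<and> (admissible A \<delta> \<epsilon> \<eta> \<tau> k0 c0 \<noteq> {} \<longleftrightarrow> (\<forall>t\<ge>0. kM A \<delta> k0 cm t \<ge> 0))
       \<and> (lambda0 \<epsilon> \<eta> \<tau> \<ge> A - \<delta> \<longrightarrow>
            (\<forall>c0'. L1_nonneg_init \<tau> c0' \<and>
                   emeasure lborel {u \<in> {-\<tau>..<0}. c0' u > 0} > 0 \<longrightarrow>
                   admissible A \<delta> \<epsilon> \<eta> \<tau> k0 c0' = {}))"
proof -
  have p12: "(admissible A \<delta> \<epsilon> \<eta> \<tau> k0 c0 \<noteq> {} \<longleftrightarrow> cm \<in> admissible A \<delta> \<epsilon> \<eta> \<tau> k0 c0)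
       \<and> (admissible A \<delta> \<epsilon> \<eta> \<tau> k0 c0 \<noteq> {} \<longleftrightarrow> (\<forall>t\<ge>0. kM A \<delta> k0 cm t \<ge> 0))"
    by (rule part12) (use assms in auto)
  have p3: "lambda0 \<epsilon> \<eta> \<tau> \<ge> A - \<delta> \<longrightarrow>
            (\<forall>c0'. L1_nonneg_init \<tau> c0' \<and>
                   emeasure lborel {u \<in> {-\<tau>..<0}. c0' u > 0} > 0 \<longrightarrow>
                   admissible A \<delta> \<epsilon> \<eta> \<tau> k0 c0' = {})"
  proof (intro impI allI)
    fix c0' assume lam: "lambda0 \<epsilon> \<eta> \<tau> \<ge> A - \<delta>"
      and h: "L1_nonneg_init \<tau> c0' \<and> emeasure lborel {u \<in> {-\<tau>..<0}. c0' u > 0} > 0"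
    show "admissible A \<delta> \<epsilon> \<eta> \<tau> k0 c0' = {}"
    proof (rule ccontr)
      assume "admissible A \<delta> \<epsilon> \<eta> \<tau> k0 c0' \<noteq> {}"
      then obtain c where c: "c \<in> admissible A \<delta> \<epsilon> \<eta> \<tau> k0 c0'" by blast
      show False
        by (rule part3_main[OF _ _ _ _ lam _ _ c]) (use assms h in auto)
    qed
  qed
  show ?thesis using p12 p3 by blast
qed

end
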